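(* Let $q$ be a prime power, $n\ge 2$, $K=\mathbb{F}_{q^n}$, $d=\frac{q^n-1}{q-1}$. The function fields $E_{1,\mathrm{Kum}}=K(x,y)$ with $y^d=s_{n,1}(x)$ and $E_{n-1,\mathrm{Kum}}=K(x,y)$ with $y^d=s_{n,n-1}(x)$ are both isomorphic over $K$ to the trace-norm function field $E_n=K(x,y)$ with $y^{q^{n-1}}+\dots+y^q+y=x^{1+q+\dots+q^{n-1}}$.
   Context: For a prime power $q$ and integers $n\ge 1$, $0\le i\le n$, the $i$-th $(n,q)$-elementary symmetric polynomial is $s_{n,i}(t)=\sum_{0\le j_1<\dots<j_i\le n-1} t^{q^{j_1}+\dots+q^{j_i}}\in\mathbb{F}_p[t]$; $s_{n,1}$ is the trace $\sum_{j=0}^{n-1}t^{q^j}$. *)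

theory Defs
  imports "HOL-Algebra.QuotRing" "HOL-Computational_Algebra.Polynomial"
          "HOL-Computational_Algebra.Fraction_Field"
begin

definition sym_qpoly :: "nat \<Rightarrow> nat \<Rightarrow> nat \<Rightarrow> 'k::field poly" where
  "sym_qpoly q n i = (\<Sum>J\<in>{J. J \<subseteq> {0..<n} \<and> card J = i}. monom 1 (\<Sum>j\<in>J. q ^ j))"

text \<open>Rational function field K(x) is 'k poly fract; x is the image of [:0,1:].
  A plane curve F(x,y) = 0 is given as a polynomial in y over K(x).\<close>
definition const_rf :: "'k::field poly \<Rightarrow> 'k poly fract poly" where
  "const_rf p = [: Fract p 1 :]"

definition poly_ring :: "'a::comm_ring_1 poly ring" where
  "poly_ring = \<lparr>carrier = UNIV, monoid.mult = (*), one = 1, zero = 0, add = (+)\<rparr>"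

definition function_field :: "'k::field poly fract poly \<Rightarrow> 'k poly fract poly set ring" where
  "function_field F = poly_ring Quot (PIdl\<^bsub>poly_ring\<^esub> F)"

definition ff_const :: "'k::field poly fract poly \<Rightarrow> 'k \<Rightarrow> 'k poly fract poly set" where
  "ff_const F c = (PIdl\<^bsub>poly_ring\<^esub> F) +>\<^bsub>poly_ring\<^esub> const_rf [:c:]"

definition ff_iso_over_K :: "'k::field poly fract poly \<Rightarrow> 'k poly fract poly \<Rightarrow> bool" where
  "ff_iso_over_K F G \<longleftrightarrow> (\<exists>h \<in> ring_iso (function_field F) (function_field G).
       \<forall>c. h (ff_const F c) = ff_const G c)"

definition kummer_curve :: "nat \<Rightarrow> 'k::field poly \<Rightarrow> 'k poly fract poly" where
  "kummer_curve d s = monom 1 d - const_rf s"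

definition trace_norm_curve :: "nat \<Rightarrow> nat \<Rightarrow> 'k::field poly fract poly" where
  "trace_norm_curve q n = (\<Sum>j<n. monom 1 (q ^ j)) - const_rf (monom 1 (\<Sum>j<n. q ^ j))"

end

theory Submission
  imports Defs
begin


lemma cring_poly_ring: "cring (poly_ring :: 'a::comm_ring_1 poly ring)"
  unfolding poly_ring_def
proof (rule cringI)
  show "abelian_group \<lparr>carrier = UNIV, monoid.mult = (*), one = 1::'a poly, zero = 0, add = (+)\<rparr>"
    by (rule abelian_groupI) (auto intro: left_minus)
  show "Group.comm_monoid \<lparr>carrier = UNIV, monoid.mult = (*), one = 1::'a poly, zero = 0, add = (+)\<rparr>"
    by (simp add: Group.monoid.intro monoid.monoid_comm_monoidI)
qed (auto simp: distrib_right)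

lemma dvd_sub_sym: "(F::'a::comm_ring_1) dvd a - b \<Longrightarrow> F dvd b - a"
  by (metis dvd_minus_iff minus_diff_eq)

definition coset :: "'a::comm_ring_1 poly \<Rightarrow> 'a poly \<Rightarrow> 'a poly set" where
  "coset F a = PIdl\<^bsub>poly_ring\<^esub> F +>\<^bsub>poly_ring\<^esub> a"

lemma coset_char: "coset F a = {b. F dvd (b - a)}"
  unfolding coset_def cgenideal_def a_r_coset_def r_coset_def poly_ring_def
  by (auto simp: dvd_def algebra_simps)

lemma coset_eq: "coset F a = coset F b \<longleftrightarrow> F dvd (a - b)"
  unfolding coset_char
proof
  assume "{c. F dvd c - a} = {c. F dvd c - b}"
  then show "F dvd a - b" by (metis (mono_tags) dvd_0_right mem_Collect_eq right_minus_eq)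
next
  assume h: "F dvd a - b"
  have "F dvd c - a \<longleftrightarrow> F dvd c - b" for c
    by (metis diff_add_cancel diff_diff_eq2 dvd_add_left_iff dvd_add_right_iff h)
  then show "{c. F dvd c - a} = {c. F dvd c - b}" by auto
qed

lemma ideal_PIdl: "ideal (PIdl\<^bsub>poly_ring\<^esub> F) (poly_ring :: 'a::comm_ring_1 poly ring)"
  by (rule cring.cgenideal_ideal[OF cring_poly_ring]) (simp add: poly_ring_def)

lemma carrier_ff: "carrier (function_field F) = range (coset F)"
  unfolding function_field_def FactRing_def coset_def A_RCOSETS_def RCOSETS_def a_r_coset_def
  by (auto simp: poly_ring_def)

lemma ff_mult: "coset F a \<otimes>\<^bsub>function_field F\<^esub> coset F b = coset F (a * b)"
  using ring_hom_mult[OF ideal.rcos_ring_hom[OF ideal_PIdl], of a b F]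
  unfolding function_field_def coset_def by (simp add: poly_ring_def)

lemma ff_add: "coset F a \<oplus>\<^bsub>function_field F\<^esub> coset F b = coset F (a + b)"
  using ring_hom_add[OF ideal.rcos_ring_hom[OF ideal_PIdl], of a b F]
  unfolding function_field_def coset_def by (simp add: poly_ring_def)

lemma ff_one: "\<one>\<^bsub>function_field F\<^esub> = coset F 1"
  using ring_hom_one[OF ideal.rcos_ring_hom[OF ideal_PIdl], of F]
  unfolding function_field_def coset_def by (simp add: poly_ring_def)

lemma h_coset:
  assumes well: "\<And>a b. F dvd a - b \<Longrightarrow> G dvd \<Phi> a - \<Phi> b"
  shows "(\<lambda>X. coset G (\<Phi> (SOME a. X = coset F a))) (coset F a) = coset G (\<Phi> a)"
proof -
  have "coset F a = coset F (SOME b. coset F a = coset F b)" by (rule someI_ex) auto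
  then have "F dvd (SOME b. coset F a = coset F b) - a" by (simp add: coset_eq dvd_sub_sym)
  then have "G dvd \<Phi> (SOME b. coset F a = coset F b) - \<Phi> a" by (rule well)
  then show ?thesis by (simp add: coset_eq)
qed

lemma quot_iso:
  fixes F G :: "'k::field poly fract poly"
  assumes well: "\<And>a b. F dvd a - b \<Longrightarrow> G dvd \<Phi> a - \<Phi> b"
    and add: "\<And>a b. G dvd \<Phi> (a + b) - (\<Phi> a + \<Phi> b)"
    and mult: "\<And>a b. G dvd \<Phi> (a * b) - (\<Phi> a * \<Phi> b)"
    and one: "G dvd \<Phi> 1 - 1"
    and inj: "\<And>a b. G dvd \<Phi> a - \<Phi> b \<Longrightarrow> F dvd a - b"
    and surj: "\<And>b. \<exists>a. G dvd \<Phi> a - b"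
    and const: "\<And>c. G dvd \<Phi> (const_rf [:c:]) - const_rf [:c:]"
  shows "ff_iso_over_K F G"
proof -
  define h where "h = (\<lambda>X. coset G (\<Phi> (SOME a. X = coset F a)))"
  have hc: "h (coset F a) = coset G (\<Phi> a)" for a
    unfolding h_def by (rule h_coset[OF well])
  have "h \<in> ring_iso (function_field F) (function_field G)"
  proof (rule ring_iso_memI)
    show "h x \<in> carrier (function_field G)" if "x \<in> carrier (function_field F)" for x
      using that by (auto simp: carrier_ff hc)
    show "h (x \<otimes>\<^bsub>function_field F\<^esub> y) = h x \<otimes>\<^bsub>function_field G\<^esub> h y"
      if "x \<in> carrier (function_field F)" "y \<in> carrier (function_field F)" for x y
      using that mult by (clarsimp simp: carrier_ff hc ff_mult) (simp add: coset_eq)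
    show "h (x \<oplus>\<^bsub>function_field F\<^esub> y) = h x \<oplus>\<^bsub>function_field G\<^esub> h y"
      if "x \<in> carrier (function_field F)" "y \<in> carrier (function_field F)" for x y
      using that add by (clarsimp simp: carrier_ff hc ff_add) (simp add: coset_eq)
    show "h \<one>\<^bsub>function_field F\<^esub> = \<one>\<^bsub>function_field G\<^esub>"
      using one by (simp add: ff_one hc coset_eq)
    show "bij_betw h (carrier (function_field F)) (carrier (function_field G))"
      unfolding bij_betw_def
    proof
      show "inj_on h (carrier (function_field F))"
        by (auto simp: inj_on_def carrier_ff hc coset_eq intro: inj)
      show "h ` carrier (function_field F) = carrier (function_field G)"
      proof
        show "h ` carrier (function_field F) \<subseteq> carrier (function_field G)"
          by (auto simp: carrier_ff hc)
        show "carrier (function_field G) \<subseteq> h ` carrier (function_field F)"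
        proof
          fix X assume "X \<in> carrier (function_field G)"
          then obtain b where b: "X = coset G b" by (auto simp: carrier_ff)
          obtain a where "G dvd \<Phi> a - b" using surj by blast
          then have "X = h (coset F a)" by (simp add: b hc coset_eq dvd_sub_sym)
          then show "X \<in> h ` carrier (function_field F)" by (auto simp: carrier_ff)
        qed
      qed
    qed
  qed
  moreover have "h (ff_const F c) = ff_const G c" for c
    using const[of c] unfolding ff_const_def coset_def[symmetric] by (simp add: hc coset_eq)
  ultimately show ?thesis unfolding ff_iso_over_K_def by blast
qed



definition cg :: "'a::comm_ring_1 \<Rightarrow> 'a \<Rightarrow> 'a \<Rightarrow> bool" where "cg G a b \<longleftrightarrow> G dvd a - b"

lemma cg_refl [simp]: "cg G a a" by (simp add: cg_def)
lemma cg_eq: "a = b \<Longrightarrow> cg G a b" by simp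
lemma cg_sym: "cg G a b \<Longrightarrow> cg G b a" by (simp add: cg_def dvd_sub_sym)
lemma cg_trans [trans]: "cg G a b \<Longrightarrow> cg G b c \<Longrightarrow> cg G a c"
  unfolding cg_def by (metis diff_add_cancel diff_diff_eq2 dvd_add)
lemma cg_trans_eq1 [trans]: "a = b \<Longrightarrow> cg G b c \<Longrightarrow> cg G a c" by simp
lemma cg_trans_eq2 [trans]: "cg G a b \<Longrightarrow> b = c \<Longrightarrow> cg G a c" by simp
lemma cg_add: "cg G a b \<Longrightarrow> cg G c d \<Longrightarrow> cg G (a + c) (b + d)"
  unfolding cg_def by (metis add_diff_add dvd_add)
lemma cg_minus: "cg G a b \<Longrightarrow> cg G (- a) (- b)"
  unfolding cg_def by (metis dvd_minus_iff minus_diff_eq minus_diff_minus)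
lemma cg_diff: "cg G a b \<Longrightarrow> cg G c d \<Longrightarrow> cg G (a - c) (b - d)"
  using cg_add[of G a b "-c" "-d"] cg_minus[of G c d] by simp
lemma cg_mult: "cg G a b \<Longrightarrow> cg G c d \<Longrightarrow> cg G (a * c) (b * d)"
proof -
  assume "cg G a b" "cg G c d"
  then have "G dvd a * (c - d) + (a - b) * d" unfolding cg_def by simp
  then show ?thesis unfolding cg_def by (simp add: algebra_simps)
qed
lemma cg_pow: "cg G a b \<Longrightarrow> cg G (a ^ n) (b ^ n)"
  by (induct n) (auto intro: cg_mult)
lemma cg_zero_iff: "cg G a 0 \<longleftrightarrow> G dvd a" by (simp add: cg_def)
lemma cg_mult_zero: "cg G a 0 \<Longrightarrow> cg G (a * b) 0" by (simp add: cg_def)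

definition hm :: "'a::comm_ring_1 \<Rightarrow> ('b::comm_ring_1 \<Rightarrow> 'a) \<Rightarrow> bool" where
  "hm G \<Phi> \<longleftrightarrow> (\<forall>a b. cg G (\<Phi> (a + b)) (\<Phi> a + \<Phi> b)) \<and> (\<forall>a b. cg G (\<Phi> (a * b)) (\<Phi> a * \<Phi> b))
     \<and> cg G (\<Phi> 1) 1"

lemma hm_add: "hm G \<Phi> \<Longrightarrow> cg G (\<Phi> (a + b)) (\<Phi> a + \<Phi> b)" by (simp add: hm_def)
lemma hm_mult: "hm G \<Phi> \<Longrightarrow> cg G (\<Phi> (a * b)) (\<Phi> a * \<Phi> b)" by (simp add: hm_def)
lemma hm_one: "hm G \<Phi> \<Longrightarrow> cg G (\<Phi> 1) 1" by (simp add: hm_def)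
lemma hm_zero: assumes "hm G \<Phi>" shows "cg G (\<Phi> 0) 0"
proof -
  have "cg G (\<Phi> (0 + 0)) (\<Phi> 0 + \<Phi> 0)" by (rule hm_add[OF assms])
  then show ?thesis unfolding cg_def by (simp add: dvd_sub_sym)
qed
lemma hm_diff: assumes "hm G \<Phi>" shows "cg G (\<Phi> (a - b)) (\<Phi> a - \<Phi> b)"
proof -
  have "cg G (\<Phi> ((a - b) + b)) (\<Phi> (a - b) + \<Phi> b)" by (rule hm_add[OF assms])
  then show ?thesis unfolding cg_def by (simp add: algebra_simps dvd_sub_sym)
qed
lemma hm_pow: assumes "hm G \<Phi>" shows "cg G (\<Phi> (a ^ n)) (\<Phi> a ^ n)"
proof (induct n)
  case 0 then show ?case using hm_one[OF assms] by simp
next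
  case (Suc n)
  have "cg G (\<Phi> (a ^ Suc n)) (\<Phi> a * \<Phi> (a ^ n))" using hm_mult[OF assms, of a "a ^ n"] by simp
  also have "cg G (\<Phi> a * \<Phi> (a ^ n)) (\<Phi> a * \<Phi> a ^ n)" by (rule cg_mult[OF cg_refl Suc])
  finally show ?case by simp
qed
lemma hm_resp: assumes "hm G \<Phi>" "cg G (\<Phi> F) 0" "cg F a b" shows "cg G (\<Phi> a) (\<Phi> b)"
proof -
  obtain r where r: "a - b = F * r" using assms(3) unfolding cg_def by (auto simp: dvd_def)
  have "cg G (\<Phi> a - \<Phi> b) (\<Phi> (a - b))" by (rule cg_sym[OF hm_diff[OF assms(1)]])
  also have "\<Phi> (a - b) = \<Phi> (F * r)" by (simp add: r)
  also have "cg G (\<Phi> (F * r)) (\<Phi> F * \<Phi> r)" by (rule hm_mult[OF assms(1)])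
  also have "cg G (\<Phi> F * \<Phi> r) 0" by (rule cg_mult_zero[OF assms(2)])
  finally show ?thesis unfolding cg_def by simp
qed
lemma hm_comp: assumes "hm G \<Phi>" "hm F \<Psi>" "cg F (\<Psi> G) 0" shows "hm F (\<lambda>x. \<Psi> (\<Phi> x))"
  unfolding hm_def
proof (intro conjI allI)
  fix a b
  have "cg F (\<Psi> (\<Phi> (a + b))) (\<Psi> (\<Phi> a + \<Phi> b))" by (rule hm_resp[OF assms(2,3) hm_add[OF assms(1)]])
  also have "cg F (\<Psi> (\<Phi> a + \<Phi> b)) (\<Psi> (\<Phi> a) + \<Psi> (\<Phi> b))" by (rule hm_add[OF assms(2)])
  finally show "cg F (\<Psi> (\<Phi> (a + b))) (\<Psi> (\<Phi> a) + \<Psi> (\<Phi> b))" .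
  have "cg F (\<Psi> (\<Phi> (a * b))) (\<Psi> (\<Phi> a * \<Phi> b))" by (rule hm_resp[OF assms(2,3) hm_mult[OF assms(1)]])
  also have "cg F (\<Psi> (\<Phi> a * \<Phi> b)) (\<Psi> (\<Phi> a) * \<Psi> (\<Phi> b))" by (rule hm_mult[OF assms(2)])
  finally show "cg F (\<Psi> (\<Phi> (a * b))) (\<Psi> (\<Phi> a) * \<Psi> (\<Phi> b))" .
next
  have "cg F (\<Psi> (\<Phi> 1)) (\<Psi> 1)" by (rule hm_resp[OF assms(2,3) hm_one[OF assms(1)]])
  also have "cg F (\<Psi> 1) 1" by (rule hm_one[OF assms(2)])
  finally show "cg F (\<Psi> (\<Phi> 1)) 1" .
qed



definition rep :: "'k::field poly fract \<Rightarrow> 'k poly \<times> 'k poly" where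
  "rep f = (SOME ab. snd ab \<noteq> 0 \<and> f = Fract (fst ab) (snd ab))"

lemma rep: "snd (rep f) \<noteq> 0 \<and> f = Fract (fst (rep f)) (snd (rep f))"
proof -
  obtain a b where "f = Fract a b" "b \<noteq> 0" by (cases f)
  then have "\<exists>ab. snd ab \<noteq> 0 \<and> f = Fract (fst ab) (snd ab)" by (intro exI[of _ "(a,b)"]) simp
  then show ?thesis unfolding rep_def by (rule someI_ex)
qed

lemma Fract_eq_0: "b \<noteq> 0 \<Longrightarrow> (Fract a b = 0) = (a = 0)"
  by (simp add: Zero_fract_def eq_fract)

locale subst =
  fixes \<alpha> :: "'k::field poly \<Rightarrow> 'k poly fract poly" and G Y :: "'k poly fract poly"
  assumes \<alpha>_add: "\<alpha> (p + q) = \<alpha> p + \<alpha> q"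
    and \<alpha>_mult: "\<alpha> (p * q) = \<alpha> p * \<alpha> q"
    and \<alpha>_one: "\<alpha> 1 = 1"
    and \<alpha>_inv: "q \<noteq> 0 \<Longrightarrow> \<exists>u. cg G (\<alpha> q * u) 1"
begin

lemma \<alpha>_zero: "\<alpha> 0 = 0"
  using \<alpha>_add[of 0 0] by (metis add.right_neutral add_left_cancel)

definition invq :: "'k poly \<Rightarrow> 'k poly fract poly" where
  "invq q = (SOME u. cg G (\<alpha> q * u) 1)"

lemma invq: assumes "q \<noteq> 0" shows "cg G (\<alpha> q * invq q) 1"
  unfolding invq_def by (rule someI_ex[OF \<alpha>_inv[OF assms]])

definition phi :: "'k poly fract \<Rightarrow> 'k poly fract poly" where
  "phi f = \<alpha> (fst (rep f)) * invq (snd (rep f))"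

lemma phi_Fract:
  assumes b: "b \<noteq> 0" and u: "cg G (\<alpha> b * u) 1"
  shows "cg G (phi (Fract a b)) (\<alpha> a * u)"
proof -
  define a' b' where "a' = fst (rep (Fract a b))" and "b' = snd (rep (Fract a b))"
  have b': "b' \<noteq> 0" and e: "Fract a b = Fract a' b'" using rep[of "Fract a b"] by (auto simp: a'_def b'_def)
  then have e2: "a * b' = a' * b" using b by (simp add: eq_fract)
  have "phi (Fract a b) = \<alpha> a' * invq b'" by (simp add: phi_def a'_def b'_def)
  also have "cg G (\<alpha> a' * invq b') (\<alpha> a' * invq b' * (\<alpha> b * u))"
    using cg_mult[OF cg_refl[of G "\<alpha> a' * invq b'"] cg_sym[OF u]] by simp
  also have "\<alpha> a' * invq b' * (\<alpha> b * u) = \<alpha> a * u * (\<alpha> b' * invq b')"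
    using arg_cong[OF e2, of \<alpha>] by (simp add: \<alpha>_mult algebra_simps)
  also have "cg G (\<alpha> a * u * (\<alpha> b' * invq b')) (\<alpha> a * u * 1)"
    by (rule cg_mult[OF cg_refl invq[OF b']])
  finally show ?thesis by simp
qed

lemma phi_Fract1: "cg G (phi (Fract a 1)) (\<alpha> a)"
  using phi_Fract[of 1 1 a] by (simp add: \<alpha>_one)

lemma phi_zero: "phi 0 = 0"
proof -
  have "fst (rep (0::'k poly fract)) = 0" using rep[of 0] Fract_eq_0 by metis
  then show ?thesis by (simp add: phi_def \<alpha>_zero)
qed

lemma phi_add: "cg G (phi (f + g)) (phi f + phi g)"
proof -
  obtain a b where f: "f = Fract a b" "b \<noteq> 0" by (cases f)
  obtain c d where g: "g = Fract c d" "d \<noteq> 0" by (cases g)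
  have ub: "cg G (\<alpha> b * invq b) 1" and ud: "cg G (\<alpha> d * invq d) 1" using invq f g by auto
  have ubd: "cg G (\<alpha> (b * d) * (invq b * invq d)) 1"
    using cg_mult[OF ub ud] by (simp add: \<alpha>_mult algebra_simps)
  have "phi (f + g) = phi (Fract (a * d + c * b) (b * d))" using f g by simp
  also have "cg G (phi (Fract (a * d + c * b) (b * d))) (\<alpha> (a * d + c * b) * (invq b * invq d))"
    by (rule phi_Fract[OF _ ubd]) (use f g in simp)
  also have "\<alpha> (a * d + c * b) * (invq b * invq d) = \<alpha> a * invq b * (\<alpha> d * invq d) + \<alpha> c * invq d * (\<alpha> b * invq b)"
    by (simp add: \<alpha>_add \<alpha>_mult algebra_simps)
  also have "cg G (\<alpha> a * invq b * (\<alpha> d * invq d) + \<alpha> c * invq d * (\<alpha> b * invq b)) (\<alpha> a * invq b * 1 + \<alpha> c * invq d * 1)"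
    by (intro cg_add cg_mult cg_refl ub ud)
  also have "cg G (\<alpha> a * invq b * 1 + \<alpha> c * invq d * 1) (phi f + phi g)"
    using cg_add[OF cg_sym[OF phi_Fract[OF f(2) ub, of a]] cg_sym[OF phi_Fract[OF g(2) ud, of c]]] f g
    by simp
  finally show ?thesis .
qed

lemma phi_mult: "cg G (phi (f * g)) (phi f * phi g)"
proof -
  obtain a b where f: "f = Fract a b" "b \<noteq> 0" by (cases f)
  obtain c d where g: "g = Fract c d" "d \<noteq> 0" by (cases g)
  have ub: "cg G (\<alpha> b * invq b) 1" and ud: "cg G (\<alpha> d * invq d) 1" using invq f g by auto
  have ubd: "cg G (\<alpha> (b * d) * (invq b * invq d)) 1"
    using cg_mult[OF ub ud] by (simp add: \<alpha>_mult algebra_simps)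
  have "phi (f * g) = phi (Fract (a * c) (b * d))" using f g by simp
  also have "cg G (phi (Fract (a * c) (b * d))) (\<alpha> (a * c) * (invq b * invq d))"
    by (rule phi_Fract[OF _ ubd]) (use f g in simp)
  also have "\<alpha> (a * c) * (invq b * invq d) = (\<alpha> a * invq b) * (\<alpha> c * invq d)"
    by (simp add: \<alpha>_mult algebra_simps)
  also have "cg G ((\<alpha> a * invq b) * (\<alpha> c * invq d)) (phi f * phi g)"
    using cg_mult[OF cg_sym[OF phi_Fract[OF f(2) ub, of a]] cg_sym[OF phi_Fract[OF g(2) ud, of c]]] f g
    by simp
  finally show ?thesis .
qed

lemma phi_one: "cg G (phi 1) 1"
  using phi_Fract1[of 1] by (simp add: One_fract_def \<alpha>_one)

definition Phi :: "'k poly fract poly \<Rightarrow> 'k poly fract poly" where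
  "Phi P = poly (map_poly phi P) Y"

lemma Phi_pCons: "Phi (pCons c P) = phi c + Y * Phi P"
  by (simp add: Phi_def map_poly_pCons phi_zero)

lemma Phi_0 [simp]: "Phi 0 = 0" by (simp add: Phi_def)

lemma Phi_const: "Phi [:c:] = phi c"
  by (simp add: Phi_pCons)

lemma Phi_add: "cg G (Phi (P + Q)) (Phi P + Phi Q)"
proof (induct P Q rule: poly_induct2)
  case 0 then show ?case by simp
next
  case (pCons a p b q)
  have "Phi (pCons a p + pCons b q) = phi (a + b) + Y * Phi (p + q)" by (simp add: Phi_pCons)
  also have "cg G (phi (a + b) + Y * Phi (p + q)) ((phi a + phi b) + Y * (Phi p + Phi q))"
    by (intro cg_add cg_mult cg_refl phi_add pCons)
  also have "(phi a + phi b) + Y * (Phi p + Phi q) = Phi (pCons a p) + Phi (pCons b q)"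
    by (simp add: Phi_pCons algebra_simps)
  finally show ?case .
qed

lemma Phi_smult: "cg G (Phi (smult c Q)) (phi c * Phi Q)"
proof (induct Q)
  case 0 then show ?case by simp
next
  case (pCons a p)
  have "Phi (smult c (pCons a p)) = phi (c * a) + Y * Phi (smult c p)" by (simp add: Phi_pCons)
  also have "cg G (phi (c * a) + Y * Phi (smult c p)) (phi c * phi a + Y * (phi c * Phi p))"
    by (intro cg_add cg_mult cg_refl phi_mult pCons)
  also have "phi c * phi a + Y * (phi c * Phi p) = phi c * Phi (pCons a p)"
    by (simp add: Phi_pCons algebra_simps)
  finally show ?case .
qed

lemma Phi_mult: "cg G (Phi (P * Q)) (Phi P * Phi Q)"
proof (induct P)
  case 0 then show ?case by simp
next
  case (pCons a p)
  have "Phi (pCons a p * Q) = Phi (smult a Q + pCons 0 (p * Q))" by simp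
  also have "cg G (Phi (smult a Q + pCons 0 (p * Q))) (Phi (smult a Q) + Phi (pCons 0 (p * Q)))"
    by (rule Phi_add)
  also have "Phi (pCons 0 (p * Q)) = Y * Phi (p * Q)" by (simp add: Phi_pCons phi_zero)
  also have "cg G (Phi (smult a Q) + Y * Phi (p * Q)) (phi a * Phi Q + Y * (Phi p * Phi Q))"
    by (intro cg_add cg_mult cg_refl Phi_smult pCons)
  also have "phi a * Phi Q + Y * (Phi p * Phi Q) = Phi (pCons a p) * Phi Q"
    by (simp add: Phi_pCons algebra_simps)
  finally show ?case .
qed

lemma Phi_one: "cg G (Phi 1) 1"
  using phi_one by (simp add: Phi_pCons flip: pCons_one)

lemma hm_Phi: "hm G Phi"
  unfolding hm_def using Phi_add Phi_mult Phi_one by blast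

lemma Phi_monom: "cg G (Phi (monom 1 n)) (Y ^ n)"
proof (induct n)
  case 0 then show ?case using phi_one by (simp add: monom_0 Phi_const)
next
  case (Suc n)
  have "Phi (monom 1 (Suc n)) = Y * Phi (monom 1 n)" by (simp add: monom_Suc Phi_pCons phi_zero)
  also have "cg G (Y * Phi (monom 1 n)) (Y * Y ^ n)" by (intro cg_mult cg_refl Suc)
  finally show ?case by simp
qed

lemma Phi_constFract1: "cg G (Phi [:Fract p 1:]) (\<alpha> p)"
  using phi_Fract1 by (simp add: Phi_const)

end



lemma const_pCons: "[:Fract (pCons a p) 1:] = [:Fract [:a:] 1:] + [:Fract [:0,1:] 1:] * [:Fract p (1::'k::field poly):]"
proof -
  have "pCons a p = [:a:] + [:0,1:] * p" by simp
  then have "Fract (pCons a p) 1 = Fract [:a:] 1 + Fract [:0,1:] 1 * Fract p 1" by simp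
  then show ?thesis by simp
qed

lemma hm_id:
  fixes F :: "'k::field poly fract poly"
  assumes h: "hm F \<chi>"
    and ck: "\<And>k. cg F (\<chi> [:Fract [:k:] 1:]) [:Fract [:k:] 1:]"
    and cx: "cg F (\<chi> [:Fract [:0,1:] 1:]) [:Fract [:0,1:] 1:]"
    and cy: "cg F (\<chi> [:0,1:]) [:0,1:]"
  shows "cg F (\<chi> P) P"
proof -
  have c1: "cg F (\<chi> [:Fract p 1:]) [:Fract p 1:]" for p :: "'k poly"
  proof (induct p)
    case 0
    then show ?case using hm_zero[OF h] by (simp add: Zero_fract_def[symmetric])
  next
    case (pCons a p)
    have "\<chi> [:Fract (pCons a p) 1:] = \<chi> ([:Fract [:a:] 1:] + [:Fract [:0,1:] 1:] * [:Fract p 1:])"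
      by (rule arg_cong[OF const_pCons])
    also have "cg F (\<chi> ([:Fract [:a:] 1:] + [:Fract [:0,1:] 1:] * [:Fract p 1:]))
        (\<chi> [:Fract [:a:] 1:] + \<chi> [:Fract [:0,1:] 1:] * \<chi> [:Fract p 1:])"
      by (intro cg_trans[OF hm_add[OF h]] cg_add cg_refl hm_mult[OF h])
    also have "cg F (\<chi> [:Fract [:a:] 1:] + \<chi> [:Fract [:0,1:] 1:] * \<chi> [:Fract p 1:])
        ([:Fract [:a:] 1:] + [:Fract [:0,1:] 1:] * [:Fract p 1:])"
      by (intro cg_add cg_mult ck cx pCons)
    also have "[:Fract [:a:] 1:] + [:Fract [:0,1:] 1:] * [:Fract p 1:] = [:Fract (pCons a p) 1:]"
      by (rule const_pCons[symmetric])
    finally show ?case .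
  qed
  have c2: "cg F (\<chi> [:f:]) [:f:]" for f
  proof -
    obtain p q where f: "f = Fract p q" "q \<noteq> 0" by (cases f)
    have e1: "[:f:] * [:Fract q 1:] = [:Fract p 1:]" using f by (simp add: eq_fract)
    have "Fract q q = 1" using f(2) by (simp add: One_fract_def eq_fract)
    then have e2: "[:Fract q 1:] * [:Fract 1 q:] = 1" by simp
    have "\<chi> [:f:] = \<chi> [:f:] * ([:Fract q 1:] * [:Fract 1 q:])" by (simp only: e2 mult_1_right)
    also have "\<dots> = (\<chi> [:f:] * [:Fract q 1:]) * [:Fract 1 q:]" by (simp add: algebra_simps)
    also have "cg F ((\<chi> [:f:] * [:Fract q 1:]) * [:Fract 1 q:]) ((\<chi> [:f:] * \<chi> [:Fract q 1:]) * [:Fract 1 q:])"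
      by (intro cg_mult cg_refl cg_sym[OF c1])
    also have "cg F ((\<chi> [:f:] * \<chi> [:Fract q 1:]) * [:Fract 1 q:]) (\<chi> ([:f:] * [:Fract q 1:]) * [:Fract 1 q:])"
      by (intro cg_mult cg_refl cg_sym[OF hm_mult[OF h]])
    also have "cg F (\<chi> ([:f:] * [:Fract q 1:]) * [:Fract 1 q:]) ([:Fract p 1:] * [:Fract 1 q:])"
      unfolding e1 by (intro cg_mult cg_refl c1)
    also have "[:Fract p 1:] * [:Fract 1 q:] = [:f:]" using f by simp
    finally show ?thesis .
  qed
  show ?thesis
  proof (induct P)
    case 0 then show ?case using hm_zero[OF h] by simp
  next
    case (pCons c P)
    have "pCons c P = [:c:] + [:0,1:] * P" by simp
    then have "\<chi> (pCons c P) = \<chi> ([:c:] + [:0,1:] * P)" by simp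
    also have "cg F (\<chi> ([:c:] + [:0,1:] * P)) (\<chi> [:c:] + \<chi> [:0,1:] * \<chi> P)"
      by (intro cg_trans[OF hm_add[OF h]] cg_add cg_refl hm_mult[OF h])
    also have "cg F (\<chi> [:c:] + \<chi> [:0,1:] * \<chi> P) ([:c:] + [:0,1:] * P)"
      by (intro cg_add cg_mult c2 cy pCons)
    also have "[:c:] + [:0,1:] * P = pCons c P" by simp
    finally show ?case .
  qed
qed

lemma iso_from_subst:
  fixes F G :: "'k::field poly fract poly"
  assumes s1: "subst \<alpha>1 G" and s2: "subst \<alpha>2 F"
    and k1: "\<And>k. \<alpha>1 [:k:] = [:Fract [:k:] 1:]" and k2: "\<And>k. \<alpha>2 [:k:] = [:Fract [:k:] 1:]"
    and r1: "cg G (subst.Phi \<alpha>1 G Y1 F) 0" and r2: "cg F (subst.Phi \<alpha>2 F Y2 G) 0"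
    and x1: "cg F (subst.Phi \<alpha>2 F Y2 (subst.Phi \<alpha>1 G Y1 [:Fract [:0,1:] 1:])) [:Fract [:0,1:] 1:]"
    and y1: "cg F (subst.Phi \<alpha>2 F Y2 (subst.Phi \<alpha>1 G Y1 [:0,1:])) [:0,1:]"
    and x2: "cg G (subst.Phi \<alpha>1 G Y1 (subst.Phi \<alpha>2 F Y2 [:Fract [:0,1:] 1:])) [:Fract [:0,1:] 1:]"
    and y2: "cg G (subst.Phi \<alpha>1 G Y1 (subst.Phi \<alpha>2 F Y2 [:0,1:])) [:0,1:]"
  shows "ff_iso_over_K F G"
proof -
  define \<Phi> where "\<Phi> = subst.Phi \<alpha>1 G Y1"
  define \<Psi> where "\<Psi> = subst.Phi \<alpha>2 F Y2"
  have h1: "hm G \<Phi>" unfolding \<Phi>_def by (rule subst.hm_Phi[OF s1])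
  have h2: "hm F \<Psi>" unfolding \<Psi>_def by (rule subst.hm_Phi[OF s2])
  have c1: "cg G (\<Phi> [:Fract [:k:] 1:]) [:Fract [:k:] 1:]" for k
    using subst.Phi_constFract1[OF s1, where p="[:k:]"] k1 by (simp add: \<Phi>_def)
  have c2: "cg F (\<Psi> [:Fract [:k:] 1:]) [:Fract [:k:] 1:]" for k
    using subst.Phi_constFract1[OF s2, where p="[:k:]"] k2 by (simp add: \<Psi>_def)
  have id1: "cg F (\<Psi> (\<Phi> P)) P" for P
  proof (rule hm_id[OF hm_comp[OF h1 h2]])
    show "cg F (\<Psi> G) 0" using r2 by (simp add: \<Psi>_def)
    show "cg F (\<Psi> (\<Phi> [:Fract [:k:] 1:])) [:Fract [:k:] 1:]" for k
      using cg_trans[OF hm_resp[OF h2 _ c1] c2] r2 by (simp add: \<Psi>_def)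
  qed (use x1 y1 in \<open>simp_all add: \<Phi>_def \<Psi>_def\<close>)
  have id2: "cg G (\<Phi> (\<Psi> P)) P" for P
  proof (rule hm_id[OF hm_comp[OF h2 h1]])
    show "cg G (\<Phi> F) 0" using r1 by (simp add: \<Phi>_def)
    show "cg G (\<Phi> (\<Psi> [:Fract [:k:] 1:])) [:Fract [:k:] 1:]" for k
      using cg_trans[OF hm_resp[OF h1 _ c2] c1] r1 by (simp add: \<Phi>_def)
  qed (use x2 y2 in \<open>simp_all add: \<Phi>_def \<Psi>_def\<close>)
  have r1': "cg G (\<Phi> F) 0" using r1 by (simp add: \<Phi>_def)
  have r2': "cg F (\<Psi> G) 0" using r2 by (simp add: \<Psi>_def)
  show ?thesis
  proof (rule quot_iso[of F G \<Phi>])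
    show "G dvd \<Phi> a - \<Phi> b" if "F dvd a - b" for a b
      using hm_resp[OF h1 r1', of a b] that by (simp add: cg_def)
    show "G dvd \<Phi> (a + b) - (\<Phi> a + \<Phi> b)" for a b using hm_add[OF h1] by (simp add: cg_def)
    show "G dvd \<Phi> (a * b) - (\<Phi> a * \<Phi> b)" for a b using hm_mult[OF h1] by (simp add: cg_def)
    show "G dvd \<Phi> 1 - 1" using hm_one[OF h1] by (simp add: cg_def)
    show "F dvd a - b" if "G dvd \<Phi> a - \<Phi> b" for a b
    proof -
      have "cg F (\<Psi> (\<Phi> a)) (\<Psi> (\<Phi> b))" using hm_resp[OF h2 r2'] that by (simp add: cg_def)
      then have "cg F a b" using cg_trans[OF cg_trans[OF cg_sym[OF id1] _] id1] by blast
      then show ?thesis by (simp add: cg_def)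
    qed
    show "\<exists>a. G dvd \<Phi> a - b" for b using id2[of b] by (auto simp: cg_def)
    show "G dvd \<Phi> (const_rf [:c:]) - const_rf [:c:]" for c
      using c1[of c] by (simp add: cg_def const_rf_def)
  qed
qed



definition lift :: "'k::field poly \<Rightarrow> 'k poly fract poly" where
  "lift p = map_poly (\<lambda>k. Fract [:k:] 1) p"

lemma Fract_const_0: "Fract [:0:] (1::'k::field poly) = 0"
  by (simp add: Zero_fract_def)

lemma Fract_const_1: "Fract [:1:] (1::'k::field poly) = 1"
  by (simp add: One_fract_def pCons_one)

lemma Fract_zero1: "Fract 0 (1::'k::field poly) = 0"
  by (simp add: Zero_fract_def)

lemma lift_pCons: "lift (pCons a p) = pCons (Fract [:a:] 1) (lift p)"
  unfolding lift_def by (rule map_poly_pCons) (simp add: Zero_fract_def)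

lemma lift_0 [simp]: "lift 0 = 0" by (simp add: lift_def)

lemma lift_const: "lift [:k:] = [:Fract [:k:] 1:]"
  by (simp add: lift_pCons)

lemma lift_one: "lift 1 = 1"
  by (simp add: lift_def map_poly_1 Fract_const_1)

lemma lift_add: "lift (p + q) = lift p + lift q"
  by (induct p q rule: poly_induct2) (simp_all add: lift_pCons)

lemma lift_smult: "lift (smult a p) = smult (Fract [:a:] 1) (lift p)"
  unfolding lift_def by (rule map_poly_smult) (simp_all add: Zero_fract_def ac_simps)

lemma lift_mult: "lift (p * q) = lift p * lift q"
  by (induct p) (simp_all add: lift_pCons lift_add lift_smult Fract_const_0 Fract_zero1 flip: lift_def)

lemma lift_minus: "lift (- p) = - lift p"
  using lift_add[of p "- p"] by (simp add: add_eq_0_iff)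

lemma lift_diff: "lift (p - q) = lift p - lift q"
  using lift_add[of "p - q" q] by (simp add: algebra_simps)

lemma lift_power: "lift (p ^ n) = lift p ^ n"
  by (induct n) (simp_all add: lift_one lift_mult)

lemma lift_monom: "lift (monom 1 n) = monom 1 n"
  unfolding lift_def by (subst map_poly_monom) (simp_all add: Zero_fract_def Fract_const_1)

lemma lift_x: "lift [:0,1:] = [:0,1:]"
  by (simp add: lift_pCons Fract_const_1 Fract_const_0 Fract_zero1)

lemma const_power: "[:x:] ^ n = [:x ^ n:]"
  by (induct n) (simp_all add: ac_simps)

lemma Fract_self: "x \<noteq> 0 \<Longrightarrow> Fract x x = (1::'a::idom fract)"
  by (simp add: One_fract_def eq_fract)

lemma Fract_power: "Fract (x::'a::idom) 1 ^ n = Fract (x ^ n) 1"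
  by (induct n) (simp_all add: One_fract_def ac_simps)



lemma finite_deg: "finite {r :: 'k::{zero,finite} poly. degree r \<le> m}"
proof -
  have "{r :: 'k poly. degree r \<le> m} \<subseteq> Poly ` {xs. set xs \<subseteq> UNIV \<and> length xs \<le> Suc m}"
  proof
    fix r :: "'k poly" assume "r \<in> {r. degree r \<le> m}"
    then have "length (coeffs r) \<le> Suc m" by (cases "r = 0") (simp_all add: length_coeffs_degree)
    then show "r \<in> Poly ` {xs. set xs \<subseteq> UNIV \<and> length xs \<le> Suc m}"
      by (intro image_eqI[of _ _ "coeffs r"]) simp_all
  qed
  moreover have "finite {xs :: 'k list. set xs \<subseteq> UNIV \<and> length xs \<le> Suc m}"
    by (rule finite_lists_length_le) simp
  ultimately show ?thesis by (meson finite_imageI finite_subset)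
qed

lemma pigeon:
  fixes f :: "nat \<Rightarrow> 'a"
  assumes "finite (range f)" shows "\<exists>i j. i < j \<and> f i = f j"
proof -
  have "\<not> inj f" using assms finite_imageD by fastforce
  then obtain i j where "i \<noteq> j" "f i = f j" unfolding inj_def by blast
  then show ?thesis by (metis linorder_neq_iff)
qed

lemma inv_lemma:
  fixes a b c :: "'k::{field,finite} poly"
  assumes b: "degree b > 0" and c: "c \<noteq> 0"
  shows "\<exists>u. cg (lift a - [:Fract b 1:]) (lift c * u) 1"
proof -
  define G where "G = lift a - [:Fract b 1:]"
  have "range (\<lambda>i. a ^ i mod c) \<subseteq> {r. degree r \<le> degree c}"
  proof (rule subsetI, clarify)
    fix i show "degree (a ^ i mod c) \<le> degree c"
      using degree_mod_less[OF c, of "a ^ i"] by (cases "a ^ i mod c = 0") auto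
  qed
  then have "finite (range (\<lambda>i. a ^ i mod c))" using finite_deg finite_subset by blast
  then obtain i j where ij: "i < j" "a ^ i mod c = a ^ j mod c" using pigeon by blast
  then have "c dvd a ^ j - a ^ i" by (metis mod_eq_dvd_iff)
  then obtain s where s: "a ^ j - a ^ i = c * s" by (auto simp: dvd_def)
  have b0: "b \<noteq> 0" using b by auto
  have "degree (b ^ j) \<noteq> degree (b ^ i)" using b ij(1) by (simp add: degree_power_eq b0)
  then have w0: "b ^ j - b ^ i \<noteq> 0" by auto
  define w where "w = Fract (b ^ j - b ^ i) (1::'k poly)"
  have wnz: "w \<noteq> 0" using w0 by (simp add: w_def Fract_eq_0)
  have ga: "cg G (lift a) [:Fract b 1:]" by (simp add: cg_def G_def)
  have "lift c * (lift s * [:inverse w:]) = (lift a ^ j - lift a ^ i) * [:inverse w:]"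
    using arg_cong[OF s, of lift] by (simp add: lift_mult lift_diff lift_power algebra_simps)
  also have "cg G ((lift a ^ j - lift a ^ i) * [:inverse w:]) (([:Fract b 1:] ^ j - [:Fract b 1:] ^ i) * [:inverse w:])"
    by (intro cg_mult cg_diff cg_pow ga cg_refl)
  also have "([:Fract b 1:] ^ j - [:Fract b 1:] ^ i) * [:inverse w:] = 1"
    using w0 by (simp add: const_power Fract_power w_def Fract_self)
  finally show ?thesis unfolding G_def by blast
qed



lemma subst_lift:
  fixes a b :: "'k::{field,finite} poly"
  assumes "degree b > 0" shows "subst lift (lift a - [:Fract b 1:])"
  by unfold_locales (simp_all add: lift_add lift_mult lift_one inv_lemma[OF assms])

lemma (in subst) Phi_y: "cg G (Phi [:0,1:]) Y"
proof -
  have "Phi [:0,1:] = Y * phi 1" by (simp add: Phi_pCons phi_zero)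
  also have "cg G (Y * phi 1) (Y * 1)" by (intro cg_mult cg_refl phi_one)
  finally show ?thesis by simp
qed

lemma (in subst) Phi_lift:
  assumes k: "\<And>k. \<alpha> [:k:] = [:Fract [:k:] 1:]" and Y: "Y = [:Fract [:0,1:] 1:]"
  shows "cg G (Phi (lift p)) [:Fract p 1:]"
proof (induct p)
  case 0 then show ?case by (simp add: Zero_fract_def[symmetric])
next
  case (pCons a p)
  have "Phi (lift (pCons a p)) = phi (Fract [:a:] 1) + Y * Phi (lift p)"
    by (simp add: lift_pCons Phi_pCons)
  also have "cg G (phi (Fract [:a:] 1) + Y * Phi (lift p)) (\<alpha> [:a:] + Y * [:Fract p 1:])"
    by (intro cg_add cg_mult cg_refl phi_Fract1 pCons)
  also have "\<alpha> [:a:] + Y * [:Fract p 1:] = [:Fract (pCons a p) 1:]"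
    by (simp only: k Y const_pCons[symmetric])
  finally show ?case .
qed



lemma swap_iso:
  fixes a b :: "'k::{field,finite} poly"
  assumes a: "degree a > 0" and b: "degree b > 0"
  shows "ff_iso_over_K (lift a - [:Fract b 1:]) (lift b - [:Fract a 1:])"
proof -
  define F where "F = lift a - [:Fract b 1:]"
  define G where "G = lift b - [:Fract a 1:]"
  define X :: "'k poly fract poly" where "X = [:Fract [:0,1:] 1:]"
  have s1: "subst lift G" unfolding G_def by (rule subst_lift[OF a])
  have s2: "subst lift F" unfolding F_def by (rule subst_lift[OF b])
  define \<Phi> where "\<Phi> = subst.Phi lift G X"
  define \<Psi> where "\<Psi> = subst.Phi lift F X"
  have h1: "hm G \<Phi>" unfolding \<Phi>_def by (rule subst.hm_Phi[OF s1])
  have h2: "hm F \<Psi>" unfolding \<Psi>_def by (rule subst.hm_Phi[OF s2])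
  have r1: "cg G (\<Phi> F) 0"
  proof -
    have "cg G (\<Phi> F) (\<Phi> (lift a) - \<Phi> [:Fract b 1:])" unfolding F_def by (rule hm_diff[OF h1])
    also have "cg G (\<Phi> (lift a) - \<Phi> [:Fract b 1:]) ([:Fract a 1:] - lift b)"
      unfolding \<Phi>_def
      by (intro cg_diff subst.Phi_lift[OF s1] subst.Phi_constFract1[OF s1]) (simp_all add: lift_const X_def)
    also have "[:Fract a 1:] - lift b = - G" by (simp add: G_def)
    finally show ?thesis by (simp add: cg_def)
  qed
  have r2: "cg F (\<Psi> G) 0"
  proof -
    have "cg F (\<Psi> G) (\<Psi> (lift b) - \<Psi> [:Fract a 1:])" unfolding G_def by (rule hm_diff[OF h2])
    also have "cg F (\<Psi> (lift b) - \<Psi> [:Fract a 1:]) ([:Fract b 1:] - lift a)"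
      unfolding \<Psi>_def
      by (intro cg_diff subst.Phi_lift[OF s2] subst.Phi_constFract1[OF s2]) (simp_all add: lift_const X_def)
    also have "[:Fract b 1:] - lift a = - F" by (simp add: F_def)
    finally show ?thesis by (simp add: cg_def)
  qed
  have px: "cg G (\<Phi> X) [:0,1:]" using subst.Phi_constFract1[OF s1, where p="[:0,1:]" and Y=X]
    by (simp add: \<Phi>_def X_def lift_x)
  have qx: "cg F (\<Psi> X) [:0,1:]" using subst.Phi_constFract1[OF s2, where p="[:0,1:]" and Y=X]
    by (simp add: \<Psi>_def X_def lift_x)
  have py: "cg G (\<Phi> [:0,1:]) X" unfolding \<Phi>_def by (rule subst.Phi_y[OF s1])
  have qy: "cg F (\<Psi> [:0,1:]) X" unfolding \<Psi>_def by (rule subst.Phi_y[OF s2])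
  have "ff_iso_over_K F G"
  proof (rule iso_from_subst[OF s1 s2, where ?Y1.0=X and ?Y2.0=X])
    show "lift [:k:] = [:Fract [:k:] 1:]" for k by (rule lift_const)
    show "lift [:k:] = [:Fract [:k:] 1:]" for k by (rule lift_const)
    show "cg G (subst.Phi lift G X F) 0" using r1 by (simp add: \<Phi>_def)
    show "cg F (subst.Phi lift F X G) 0" using r2 by (simp add: \<Psi>_def)
    show "cg F (subst.Phi lift F X (subst.Phi lift G X [:Fract [:0,1:] 1:])) [:Fract [:0,1:] 1:]"
      using cg_trans[OF hm_resp[OF h2 r2 px] qy] by (simp add: \<Phi>_def \<Psi>_def X_def)
    show "cg F (subst.Phi lift F X (subst.Phi lift G X [:0,1:])) [:0,1:]"
      using cg_trans[OF hm_resp[OF h2 r2 py] qx] by (simp add: \<Phi>_def \<Psi>_def X_def)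
    show "cg G (subst.Phi lift G X (subst.Phi lift F X [:Fract [:0,1:] 1:])) [:Fract [:0,1:] 1:]"
      using cg_trans[OF hm_resp[OF h1 r1 qx] py] by (simp add: \<Phi>_def \<Psi>_def X_def)
    show "cg G (subst.Phi lift G X (subst.Phi lift F X [:0,1:])) [:0,1:]"
      using cg_trans[OF hm_resp[OF h1 r1 qy] px] by (simp add: \<Phi>_def \<Psi>_def X_def)
  qed
  then show ?thesis by (simp add: F_def G_def)
qed



definition xf :: "'k::field poly fract" where "xf = Fract [:0,1:] 1"
definition ix :: "'k::field poly fract" where "ix = Fract 1 [:0,1:]"

lemma ix_xf: "ix * xf = (1 :: 'k::field poly fract)"
  by (simp add: ix_def xf_def One_fract_def eq_fract)

lemma xf_ix: "xf * ix = (1 :: 'k::field poly fract)"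
  using ix_xf by (simp add: mult.commute)

lemma xf_nz: "xf \<noteq> (0 :: 'k::field poly fract)"
  by (simp add: xf_def Fract_eq_0)

lemma inverse_xf: "inverse xf = (ix :: 'k::field poly fract)"
  by (simp add: ix_def xf_def)

lemma Fract_nz1: "Fract p (1::'k::field poly) \<noteq> 0 \<longleftrightarrow> p \<noteq> 0"
  by (simp add: Fract_eq_0)

lemma poly_lift_xf: "poly (lift p) xf = Fract p (1::'k::field poly)"
proof (induct p)
  case 0 then show ?case by (simp add: Fract_zero1)
next
  case (pCons a p)
  have "pCons a p = [:a:] + [:0,1:] * p" by simp
  then have "Fract (pCons a p) 1 = Fract [:a:] 1 + Fract [:0,1:] 1 * Fract p 1" by simp
  then show ?case using pCons by (simp add: lift_pCons xf_def)
qed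

lemma reflect_lift: "reflect_poly (lift p) = lift (reflect_poly (p :: 'k::field poly))"
proof -
  have dg: "degree (lift q) = degree q" for q :: "'k poly"
    unfolding lift_def by (rule degree_map_poly) (simp add: Fract_nz1)
  show ?thesis
    by (rule poly_eqI) (simp add: coeff_reflect_poly dg[unfolded lift_def] lift_def coeff_map_poly Fract_const_0 Fract_zero1)
qed

lemma poly_lift_ix_nz:
  assumes "p \<noteq> (0::'k::field poly)" shows "poly (lift p) ix \<noteq> 0"
proof
  assume h: "poly (lift p) ix = 0"
  have "poly (reflect_poly (lift p)) xf = xf ^ degree (lift p) * poly (lift p) (inverse xf)"
    by (rule poly_reflect_poly_nz[OF xf_nz])
  also have "\<dots> = 0" using h by (simp add: inverse_xf)
  finally have "Fract (reflect_poly p) 1 = 0" by (simp add: reflect_lift poly_lift_xf)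
  then show False using assms by (simp add: Fract_eq_0)
qed

definition al :: "'k::field poly \<Rightarrow> 'k poly fract poly" where
  "al p = [:poly (lift p) ix:]"

lemma subst_al: "subst (al :: 'k::field poly \<Rightarrow> _) G"
proof
  fix p q :: "'k poly"
  show "al (p + q) = al p + al q" by (simp add: al_def lift_add)
  show "al (p * q) = al p * al q" by (simp add: al_def lift_mult)
  show "al 1 = 1" by (simp add: al_def lift_one)
  assume "q \<noteq> 0"
  then have "al q * [:inverse (poly (lift q) ix):] = 1" by (simp add: al_def poly_lift_ix_nz)
  then show "\<exists>u. cg G (al q * u) 1" by (metis cg_refl)
qed

lemma al_const: "al [:k:] = [:Fract [:k:] 1:]"
  by (simp add: al_def lift_const)

definition YY :: "'k::field poly fract poly" where "YY = [:ix:] * [:0,1:]"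

context
  fixes G :: "'k::field poly fract poly"
begin

interpretation s: subst al G YY by (rule subst_al)

lemma La: "cg G (s.Phi [:xf:]) [:ix:]"
  using s.Phi_constFract1[of "[:0,1:]"] by (simp add: xf_def al_def lift_x)

lemma Lb: "cg G (s.Phi [:ix:]) [:xf:]"
proof -
  have "al [:0,1:] * [:xf:] = 1" by (simp add: al_def lift_x ix_xf xf_ix)
  then have e: "cg G (al [:0,1:] * [:xf:]) 1" by (metis cg_refl)
  have "cg G (s.phi (Fract 1 [:0,1:])) (al 1 * [:xf:])"
    by (rule s.phi_Fract[OF _ e]) simp
  then show ?thesis by (simp add: s.Phi_const ix_def s.\<alpha>_one)
qed

lemma Lc: "cg G (s.Phi [:0,1:]) YY"
  by (rule s.Phi_y)

lemma Ld: "cg G (s.Phi YY) [:0,1:]"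
proof -
  have "cg G (s.Phi YY) (s.Phi [:ix:] * s.Phi [:0,1:])"
    by (rule s.Phi_mult[of "[:ix:]" "[:0,1:]", folded YY_def])
  also have "cg G (s.Phi [:ix:] * s.Phi [:0,1:]) ([:xf:] * YY)"
    by (intro cg_mult Lb Lc)
  also have "[:xf:] * YY = [:0,1:]"
    by (simp add: YY_def mult.assoc[symmetric] xf_ix ix_xf)
  finally show ?thesis .
qed

lemma Lmonom: "cg G (s.Phi (monom 1 d)) ([:ix ^ d:] * monom 1 d)"
proof -
  have "YY ^ d = [:ix ^ d:] * monom 1 d"
    unfolding YY_def power_mult_distrib const_power by (simp add: monom_altdef)
  then show ?thesis using cg_trans_eq2[OF s.Phi_monom[of d]] by blast
qed

end

lemma ix_pow: "m \<le> d \<Longrightarrow> ix ^ d * xf ^ m = (ix ^ (d - m) :: 'k::field poly fract)"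
proof -
  assume "m \<le> d"
  then have "ix ^ d * xf ^ m = ix ^ (d - m) * (ix * xf) ^ m"
    by (simp add: power_mult_distrib power_add[symmetric] mult.assoc)
  then show ?thesis by (simp add: ix_xf)
qed

lemma inv_iso:
  fixes s t :: "'k::field poly"
  assumes st: "poly (lift s) ix = ix ^ d * Fract t 1"
    and ts: "poly (lift t) ix = ix ^ d * Fract s 1"
  shows "ff_iso_over_K (monom 1 d - [:Fract s 1:]) (monom 1 d - [:Fract t 1:])"
proof -
  define F where "F = monom 1 d - [:Fract s 1:]"
  define G where "G = monom 1 d - [:Fract t 1:]"
  have s1: "subst al G" and s2: "subst al F" by (rule subst_al)+
  define \<Phi> where "\<Phi> = subst.Phi al G YY"
  define \<Psi> where "\<Psi> = subst.Phi al F YY"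
  have h1: "hm G \<Phi>" unfolding \<Phi>_def by (rule subst.hm_Phi[OF s1])
  have h2: "hm F \<Psi>" unfolding \<Psi>_def by (rule subst.hm_Phi[OF s2])
  have r1: "cg G (\<Phi> F) 0"
  proof -
    have "cg G (\<Phi> F) (\<Phi> (monom 1 d) - \<Phi> [:Fract s 1:])" unfolding F_def by (rule hm_diff[OF h1])
    also have "cg G (\<Phi> (monom 1 d) - \<Phi> [:Fract s 1:]) ([:ix ^ d:] * monom 1 d - al s)"
      unfolding \<Phi>_def by (intro cg_diff Lmonom subst.Phi_constFract1[OF s1])
    also have "[:ix ^ d:] * monom 1 d - al s = [:ix ^ d:] * G"
      by (simp add: al_def st G_def algebra_simps)
    finally have "G dvd \<Phi> F - [:ix ^ d:] * G" by (simp add: cg_def)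
    then show ?thesis unfolding cg_def by (metis diff_0_right diff_add_cancel dvd_add dvd_triv_right)
  qed
  have r2: "cg F (\<Psi> G) 0"
  proof -
    have "cg F (\<Psi> G) (\<Psi> (monom 1 d) - \<Psi> [:Fract t 1:])" unfolding G_def by (rule hm_diff[OF h2])
    also have "cg F (\<Psi> (monom 1 d) - \<Psi> [:Fract t 1:]) ([:ix ^ d:] * monom 1 d - al t)"
      unfolding \<Psi>_def by (intro cg_diff Lmonom subst.Phi_constFract1[OF s2])
    also have "[:ix ^ d:] * monom 1 d - al t = [:ix ^ d:] * F"
      by (simp add: al_def ts F_def algebra_simps)
    finally have "F dvd \<Psi> G - [:ix ^ d:] * F" by (simp add: cg_def)
    then show ?thesis unfolding cg_def by (metis diff_0_right diff_add_cancel dvd_add dvd_triv_right)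
  qed
  have "ff_iso_over_K F G"
  proof (rule iso_from_subst[OF s1 s2, where ?Y1.0=YY and ?Y2.0=YY])
    show "al [:k:] = [:Fract [:k:] 1:]" for k by (rule al_const)
    show "al [:k:] = [:Fract [:k:] 1:]" for k by (rule al_const)
    show "cg G (subst.Phi al G YY F) 0" using r1 by (simp add: \<Phi>_def)
    show "cg F (subst.Phi al F YY G) 0" using r2 by (simp add: \<Psi>_def)
    show "cg F (subst.Phi al F YY (subst.Phi al G YY [:Fract [:0,1:] 1:])) [:Fract [:0,1:] 1:]"
      using cg_trans[OF hm_resp[OF h2 r2 La[of G, folded \<Phi>_def]] Lb[of F, folded \<Psi>_def]] by (simp add: \<Phi>_def \<Psi>_def xf_def)
    show "cg F (subst.Phi al F YY (subst.Phi al G YY [:0,1:])) [:0,1:]"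
      using cg_trans[OF hm_resp[OF h2 r2 Lc[of G, folded \<Phi>_def]] Ld[of F, folded \<Psi>_def]] by (simp add: \<Phi>_def \<Psi>_def)
    show "cg G (subst.Phi al G YY (subst.Phi al F YY [:Fract [:0,1:] 1:])) [:Fract [:0,1:] 1:]"
      using cg_trans[OF hm_resp[OF h1 r1 La[of F, folded \<Psi>_def]] Lb[of G, folded \<Phi>_def]] by (simp add: \<Phi>_def \<Psi>_def xf_def)
    show "cg G (subst.Phi al G YY (subst.Phi al F YY [:0,1:])) [:0,1:]"
      using cg_trans[OF hm_resp[OF h1 r1 Lc[of F, folded \<Psi>_def]] Ld[of G, folded \<Phi>_def]] by (simp add: \<Phi>_def \<Psi>_def)
  qed
  then show ?thesis by (simp add: F_def G_def)
qed



lemma ff_iso_trans: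
  assumes "ff_iso_over_K F G" "ff_iso_over_K G H" shows "ff_iso_over_K F H"
proof -
  obtain h1 where h1: "h1 \<in> ring_iso (function_field F) (function_field G)" "\<forall>c. h1 (ff_const F c) = ff_const G c"
    using assms(1) unfolding ff_iso_over_K_def by blast
  obtain h2 where h2: "h2 \<in> ring_iso (function_field G) (function_field H)" "\<forall>c. h2 (ff_const G c) = ff_const H c"
    using assms(2) unfolding ff_iso_over_K_def by blast
  have "h2 \<circ> h1 \<in> ring_iso (function_field F) (function_field H)" by (rule ring_iso_set_trans[OF h1(1) h2(1)])
  moreover have "\<forall>c. (h2 \<circ> h1) (ff_const F c) = ff_const H c" using h1(2) h2(2) by simp
  ultimately show ?thesis unfolding ff_iso_over_K_def by blast
qed

lemma geom: "(q::nat) \<ge> 1 \<Longrightarrow> (q - 1) * (\<Sum>j<n. q ^ j) = q ^ n - 1"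
proof (induct n)
  case 0 then show ?case by simp
next
  case (Suc n)
  have "q ^ n \<ge> 1" using Suc.prems by simp
  have "(q - 1) * (\<Sum>j<Suc n. q ^ j) = (q ^ n - 1) + (q - 1) * q ^ n"
    using Suc by (simp add: algebra_simps)
  also have "\<dots> = q ^ Suc n - 1" using \<open>q ^ n \<ge> 1\<close> Suc.prems
    by (simp add: diff_mult_distrib algebra_simps)
  finally show ?case .
qed

lemma lift_sum: "lift (\<Sum>j\<in>A. f j) = (\<Sum>j\<in>A. lift (f j))"
  by (induct A rule: infinite_finite_induct) (simp_all add: lift_add)

lemma sym1: "sym_qpoly q n 1 = (\<Sum>j<n. monom 1 (q ^ j) :: 'k::field poly)"
proof -
  have e: "{J. J \<subseteq> {0..<n} \<and> card J = 1} = (\<lambda>j. {j}) ` {..<n}"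
    by (auto simp: card_1_singleton_iff)
  have "sym_qpoly q n 1 = (\<Sum>J\<in>(\<lambda>j. {j}) ` {..<n}. monom 1 (\<Sum>j\<in>J. q ^ j) :: 'k poly)"
    unfolding sym_qpoly_def e ..
  also have "\<dots> = (\<Sum>j<n. monom 1 (q ^ j))"
    by (subst sum.reindex) (auto simp: inj_on_def)
  finally show ?thesis .
qed

lemma symn1:
  assumes n: "n \<ge> 1"
  shows "sym_qpoly q n (n - 1) = (\<Sum>k<n. monom 1 ((\<Sum>j<n. q ^ j) - q ^ k) :: 'k::field poly)"
proof -
  have e: "{J. J \<subseteq> {0..<n} \<and> card J = n - 1} = (\<lambda>k. {..<n} - {k}) ` {..<n}"
  proof
    show "{J. J \<subseteq> {0..<n} \<and> card J = n - 1} \<subseteq> (\<lambda>k. {..<n} - {k}) ` {..<n}"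
    proof
      fix J assume "J \<in> {J. J \<subseteq> {0..<n} \<and> card J = n - 1}"
      then have J: "J \<subseteq> {..<n}" "card J = n - 1" by auto
      have "card ({..<n} - J) = 1" using J n by (simp add: card_Diff_subset finite_subset)
      then obtain k where k: "{..<n} - J = {k}" by (auto simp: card_1_singleton_iff)
      then have "k < n" by auto
      moreover have "J = {..<n} - {k}" using J(1) k by auto
      ultimately show "J \<in> (\<lambda>k. {..<n} - {k}) ` {..<n}" by auto
    qed
    show "(\<lambda>k. {..<n} - {k}) ` {..<n} \<subseteq> {J. J \<subseteq> {0..<n} \<and> card J = n - 1}"
      by auto
  qed
  have inj: "inj_on (\<lambda>k. {..<n} - {k}) {..<n}"
    unfolding inj_on_def by blast
  have "sym_qpoly q n (n - 1) = (\<Sum>J\<in>(\<lambda>k. {..<n} - {k}) ` {..<n}. monom 1 (\<Sum>j\<in>J. q ^ j) :: 'k poly)"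
    unfolding sym_qpoly_def e ..
  also have "\<dots> = (\<Sum>k<n. monom 1 (\<Sum>j\<in>{..<n} - {k}. q ^ j))"
    by (subst sum.reindex[OF inj]) simp
  also have "\<dots> = (\<Sum>k<n. monom 1 ((\<Sum>j<n. q ^ j) - q ^ k))"
    by (intro sum.cong refl) (simp add: sum_diff1_nat)
  finally show ?thesis .
qed

lemma poly_lift_monoms: "poly (lift (\<Sum>k\<in>A. monom 1 (f k) :: 'k::field poly)) z = (\<Sum>k\<in>A. z ^ f k)"
  by (simp add: lift_sum lift_monom poly_sum poly_monom)

theorem corollary4p27:
  fixes q n d :: nat
  assumes "\<exists>p k. prime p \<and> k > 0 \<and> q = p ^ k"
    and "n \<ge> 2"
    and "card (UNIV :: 'k set) = q ^ n"
    and "d = (q ^ n - 1) div (q - 1)"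
  shows "ff_iso_over_K (kummer_curve d (sym_qpoly q n 1 :: ('k::{field,finite}) poly)) (trace_norm_curve q n)
       \<and> ff_iso_over_K (kummer_curve d (sym_qpoly q n (n - 1) :: 'k poly)) (trace_norm_curve q n)"
proof -
  obtain p k where pk: "prime p" "k > 0" "q = p ^ k" using assms(1) by blast
  have "p \<ge> 2" using pk(1) by (simp add: prime_ge_2_nat)
  then have q2: "q \<ge> 2" using pk(2,3) by (metis dual_order.trans self_le_power One_nat_def Suc_1 less_imp_le_nat not_gr0 not_less_eq_eq numeral_2_eq_2 one_le_numeral pos2 power_one_right)
  define D where "D = (\<Sum>j<n. q ^ j)"
  have dD: "d = D"
  proof -
    have h: "(q - 1) * D = q ^ n - 1" unfolding D_def by (rule geom) (use q2 in simp)
    have "d = (q - 1) * D div (q - 1)" using assms(4) h by simp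
    then show ?thesis using q2 by simp
  qed
  have qD: "q ^ j \<le> D" if "j < n" for j
    unfolding D_def by (rule member_le_sum) (use that in auto)
  define t where "t = (\<Sum>j<n. monom 1 (q ^ j) :: 'k poly)"
  define s where "s = (\<Sum>j<n. monom 1 (D - q ^ j) :: 'k poly)"
  have D1: "D \<ge> 1" using qD[of 0] assms(2) by simp
  have degm: "degree (monom (1::'k) D) > 0" using D1 by (simp add: degree_monom_eq)
  have degt: "degree t > 0"
  proof -
    have "coeff t q = (\<Sum>j<n. if q ^ j = q then 1 else 0)"
      unfolding t_def by (simp add: coeff_sum coeff_monom)
    also have "\<dots> = (\<Sum>j<n. if j = 1 then 1 else 0)"
    proof (intro sum.cong refl)
      fix j show "(if q ^ j = q then 1 else 0) = (if j = 1 then (1::'k) else 0)"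
        using power_inject_exp[of q j 1] q2 by auto
    qed
    also have "\<dots> = 1" using assms(2) by simp
    finally have "coeff t q \<noteq> 0" by simp
    then have "q \<le> degree t" by (rule le_degree)
    then show ?thesis using q2 by simp
  qed
  have tn: "trace_norm_curve q n = lift t - [:Fract (monom 1 D) 1:]"
    by (simp add: trace_norm_curve_def t_def lift_sum lift_monom const_rf_def D_def)
  have k1: "kummer_curve d (sym_qpoly q n 1 :: 'k poly) = lift (monom 1 D) - [:Fract t 1:]"
    unfolding sym1 by (simp add: kummer_curve_def t_def lift_monom const_rf_def dD)
  have kt: "kummer_curve d t = monom 1 D - [:Fract t 1:]"
    by (simp add: kummer_curve_def const_rf_def dD)
  have kn: "kummer_curve d (sym_qpoly q n (n - 1) :: 'k poly) = monom 1 D - [:Fract s 1:]"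
    using assms(2) unfolding symn1[of n q, OF order_trans[OF one_le_numeral assms(2)]]
    by (simp add: kummer_curve_def s_def const_rf_def dD D_def)
  have iso1: "ff_iso_over_K (kummer_curve d (sym_qpoly q n 1 :: 'k poly)) (trace_norm_curve q n)"
    unfolding k1 tn by (rule swap_iso[OF degm degt])
  have st: "poly (lift s) ix = ix ^ D * Fract t 1"
  proof -
    have "poly (lift s) ix = (\<Sum>j<n. ix ^ (D - q ^ j))" unfolding s_def by (rule poly_lift_monoms)
    also have "\<dots> = (\<Sum>j<n. ix ^ D * xf ^ (q ^ j))" by (intro sum.cong refl) (simp add: ix_pow qD)
    also have "\<dots> = ix ^ D * poly (lift t) xf" unfolding t_def poly_lift_monoms by (simp add: sum_distrib_left)
    finally show ?thesis by (simp add: poly_lift_xf)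
  qed
  have ts: "poly (lift t) ix = ix ^ D * Fract s 1"
  proof -
    have "poly (lift t) ix = (\<Sum>j<n. ix ^ (q ^ j))" unfolding t_def by (rule poly_lift_monoms)
    also have "\<dots> = (\<Sum>j<n. ix ^ D * xf ^ (D - q ^ j))"
    proof (intro sum.cong refl)
      fix j assume "j \<in> {..<n}"
      then have "q ^ j \<le> D" using qD by simp
      then show "ix ^ (q ^ j) = ix ^ D * xf ^ (D - q ^ j)" by (simp add: ix_pow)
    qed
    also have "\<dots> = ix ^ D * poly (lift s) xf" unfolding s_def poly_lift_monoms by (simp add: sum_distrib_left)
    finally show ?thesis by (simp add: poly_lift_xf)
  qed
  have iso2: "ff_iso_over_K (kummer_curve d (sym_qpoly q n (n - 1) :: 'k poly)) (kummer_curve d t)"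
    unfolding kn kt by (rule inv_iso[OF st ts])
  have iso3: "ff_iso_over_K (kummer_curve d t) (trace_norm_curve q n)"
    using iso1 unfolding k1 kt lift_monom .
  show ?thesis using iso1 ff_iso_trans[OF iso2 iso3] by blast
qed


end
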